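(* Let $H$ be a regular non-bipartite graph whose adjacency eigenvalues are integers all having the same 2-adic valuation $\nu_2$. If $G=K_{2}\times H$, then for every vertex $u$ of $G$, $\uparrow^{2}G$ has Laplacian perfect state transfer between $(0,u)$ and $(1,u)$.
   Context: All graphs are simple, undirected and unweighted. The direct product $G\times H$ is the graph with adjacency matrix $A(G)\otimes A(H)$. For a nonzero integer $n$, $\nu_2(n)$ is the exponent of the largest power of $2$ dividing $n$, and $\nu_2(0)=\infty$. The blow-up $\uparrow^{2}G$ has vertex set $\mathbb{Z}_2\times V(G)$, with $(l,u)\sim(m,v)$ iff $u\sim v$ in $G$. A graph with Laplacian $L=D-A$ has Laplacian perfect state transfer between $a,b$ if $\exp(i\tau L)\mathbf{e}_a=\gamma\mathbf{e}_b$ for some $\tau>0$, $\gamma\in\mathbb{C}$. *)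

theory Defs
  imports Complex_Main "HOL-Library.Extended_Nat" "HOL-Computational_Algebra.Primes"
begin

definition simple_graph :: "('a \<Rightarrow> 'a \<Rightarrow> bool) \<Rightarrow> bool" where
  "simple_graph E \<longleftrightarrow> (\<forall>u v. E u v \<longrightarrow> E v u) \<and> (\<forall>u. \<not> E u u)"

definition degree :: "('a::finite \<Rightarrow> 'a \<Rightarrow> bool) \<Rightarrow> 'a \<Rightarrow> nat" where
  "degree E u = card {v. E u v}"

definition regular :: "('a::finite \<Rightarrow> 'a \<Rightarrow> bool) \<Rightarrow> bool" where
  "regular E \<longleftrightarrow> (\<exists>k. \<forall>u. degree E u = k)"

definition bipartite :: "('a \<Rightarrow> 'a \<Rightarrow> bool) \<Rightarrow> bool" where
  "bipartite E \<longleftrightarrow> (\<exists>c :: 'a \<Rightarrow> bool. \<forall>u v. E u v \<longrightarrow> c u \<noteq> c v)"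

definition adj :: "('a \<Rightarrow> 'a \<Rightarrow> bool) \<Rightarrow> 'a \<Rightarrow> 'a \<Rightarrow> real" where
  "adj E u v = (if E u v then 1 else 0)"

text \<open>Adjacency eigenvalue (the adjacency matrix is real symmetric, so real eigenvalues/eigenvectors).\<close>
definition adj_eigenvalue :: "('a::finite \<Rightarrow> 'a \<Rightarrow> bool) \<Rightarrow> real \<Rightarrow> bool" where
  "adj_eigenvalue E lam \<longleftrightarrow>
     (\<exists>v :: 'a \<Rightarrow> real. v \<noteq> (\<lambda>_. 0) \<and> (\<forall>x. (\<Sum>y\<in>UNIV. adj E x y * v y) = lam * v x))"

definition nu2 :: "int \<Rightarrow> enat" where
  "nu2 n = (if n = 0 then \<infinity> else enat (multiplicity 2 n))"

text \<open>Complete graph K_2 on vertex type bool, direct product, 2-blow-up (Z_2 = bool, 0 = False).\<close>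
definition K2 :: "bool \<Rightarrow> bool \<Rightarrow> bool" where
  "K2 x y \<longleftrightarrow> x \<noteq> y"

definition dprod :: "('a \<Rightarrow> 'a \<Rightarrow> bool) \<Rightarrow> ('b \<Rightarrow> 'b \<Rightarrow> bool) \<Rightarrow> ('a \<times> 'b) \<Rightarrow> ('a \<times> 'b) \<Rightarrow> bool" where
  "dprod E F p q \<longleftrightarrow> E (fst p) (fst q) \<and> F (snd p) (snd q)"

definition blowup2 :: "('a \<Rightarrow> 'a \<Rightarrow> bool) \<Rightarrow> (bool \<times> 'a) \<Rightarrow> (bool \<times> 'a) \<Rightarrow> bool" where
  "blowup2 E p q \<longleftrightarrow> E (snd p) (snd q)"

definition laplacian :: "('a::finite \<Rightarrow> 'a \<Rightarrow> bool) \<Rightarrow> 'a \<Rightarrow> 'a \<Rightarrow> complex" where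
  "laplacian E u v = (if u = v then of_nat (degree E u) else 0) - of_real (adj E u v)"

definition mmult :: "('a::finite \<Rightarrow> 'a \<Rightarrow> complex) \<Rightarrow> ('a \<Rightarrow> 'a \<Rightarrow> complex) \<Rightarrow> 'a \<Rightarrow> 'a \<Rightarrow> complex" where
  "mmult M N u v = (\<Sum>w\<in>UNIV. M u w * N w v)"

fun mpow :: "('a::finite \<Rightarrow> 'a \<Rightarrow> complex) \<Rightarrow> nat \<Rightarrow> 'a \<Rightarrow> 'a \<Rightarrow> complex" where
  "mpow M 0 = (\<lambda>u v. if u = v then 1 else 0)"
| "mpow M (Suc k) = mmult M (mpow M k)"

definition mexp :: "('a::finite \<Rightarrow> 'a \<Rightarrow> complex) \<Rightarrow> 'a \<Rightarrow> 'a \<Rightarrow> complex" where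
  "mexp M u v = (\<Sum>k. mpow M k u v / of_nat (fact k))"

definition laplacian_pst :: "('a::finite \<Rightarrow> 'a \<Rightarrow> bool) \<Rightarrow> 'a \<Rightarrow> 'a \<Rightarrow> bool" where
  "laplacian_pst E a b \<longleftrightarrow>
     (\<exists>\<tau>::real. \<tau> > 0 \<and> (\<exists>\<gamma>::complex.
        \<forall>c. mexp (\<lambda>x y. \<i> * of_real \<tau> * laplacian E x y) c a = (if c = b then \<gamma> else 0)))"

end

theory Submission
  imports Defs "HOL-Analysis.Analysis"
begin


lemma eig_exists:
  fixes A :: "real^'n^'n"
  assumes sym: "transpose A = A" and sub: "subspace U" and ne: "x0 \<in> U" "x0 \<noteq> 0"
    and inv: "\<And>x. x \<in> U \<Longrightarrow> A *v x \<in> U"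
  shows "\<exists>u\<in>U. u \<noteq> 0 \<and> (\<exists>\<mu>. A *v u = \<mu> *\<^sub>R u)"
proof -
  define f where "f x = inner x (A *v x)" for x
  have symI: "inner x (A *v y) = inner y (A *v x)" for x y
  proof -
    have "inner x (A *v y) = inner (x v* A) y" by (simp add: dot_lmul_matrix)
    also have "x v* A = A *v x" using vector_transpose_matrix[of x A] sym by simp
    finally show ?thesis by (simp add: inner_commute)
  qed
  let ?K = "U \<inter> sphere 0 1"
  have cK: "compact ?K"
    by (metis Int_commute closed_subspace compact_Int_closed compact_sphere sub)
  have "x0 /\<^sub>R norm x0 \<in> ?K" using ne sub by (simp add: subspace_scale)
  hence neK: "?K \<noteq> {}" by blast
  have cf: "continuous_on ?K f" unfolding f_def
    by (intro continuous_intros linear_continuous_on matrix_vector_mul_linear bounded_linear_inner_right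
        continuous_on_compose2[of UNIV "(*v) A"]) (auto intro: linear_continuous_on matrix_vector_mul_linear)
  obtain u where u: "u \<in> ?K" and umax: "\<And>y. y \<in> ?K \<Longrightarrow> f y \<le> f u"
    using continuous_attains_sup[OF cK neK cf] by blast
  define l where "l = f u"
  have bound: "f x \<le> l * inner x x" if "x \<in> U" for x
  proof (cases "x = 0")
    case True then show ?thesis by (simp add: f_def)
  next
    case False
    have "x /\<^sub>R norm x \<in> ?K" using that False sub by (simp add: subspace_scale)
    hence "f (x /\<^sub>R norm x) \<le> l" using umax l_def by blast
    moreover have "f (x /\<^sub>R norm x) = f x / (norm x)^2"
      by (simp add: f_def matrix_vector_mult_scaleR power2_eq_square field_simps)
    moreover have "inner x x = (norm x)^2" by (simp add: power2_norm_eq_inner)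
    ultimately show ?thesis using False
      by (simp add: divide_le_eq mult.commute)
  qed
  have uU: "u \<in> U" and un: "norm u = 1" using u by auto
  hence uu: "inner u u = 1" by (simp add: norm_eq_1)
  define y where "y = A *v u - l *\<^sub>R u"
  have yU: "y \<in> U" unfolding y_def using inv uU sub by (simp add: subspace_diff subspace_scale)
  have yu: "inner y u = 0" unfolding y_def using uu
    by (simp add: inner_diff_left inner_diff_right l_def f_def inner_commute)
  have yAu: "inner y (A *v u) = inner y y"
  proof -
    have "A *v u = y + l *\<^sub>R u" by (simp add: y_def)
    thus ?thesis using yu by (simp add: inner_add_right)
  qed
  have q: "2 * t * inner y y + t^2 * (f y - l * inner y y) \<le> 0" for t :: real
  proof -
    have "u + t *\<^sub>R y \<in> U" using uU yU sub by (simp add: subspace_add subspace_scale)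
    hence "f (u + t *\<^sub>R y) \<le> l * inner (u + t *\<^sub>R y) (u + t *\<^sub>R y)" by (rule bound)
    moreover have "f (u + t *\<^sub>R y) = l + 2 * t * inner y (A *v u) + t^2 * f y"
      unfolding f_def using symI[of u y]
      by (simp add: matrix_vector_right_distrib matrix_vector_mult_scaleR inner_add_left inner_add_right
           power2_eq_square l_def f_def algebra_simps)
    moreover have "inner (u + t *\<^sub>R y) (u + t *\<^sub>R y) = 1 + t^2 * inner y y"
      using uu yu by (simp add: inner_add_left inner_add_right inner_commute[of u y] power2_eq_square)
    ultimately have "l + 2 * t * inner y y + t^2 * f y \<le> l * (1 + t^2 * inner y y)" using yAu by simp
    thus ?thesis by (simp add: algebra_simps)
  qed
  have "inner y y = 0"
  proof (rule ccontr)
    assume h: "inner y y \<noteq> 0"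
    hence pos: "inner y y > 0" by (simp add: order_less_le)
    define C where "C = f y - l * inner y y"
    define t where "t = inner y y / (\<bar>C\<bar> + 1)"
    have tp: "t > 0" using pos by (simp add: t_def)
    have a0: "2 * t * inner y y + t^2 * C \<le> 0" using q C_def by simp
    have a1: "t * \<bar>C\<bar> \<le> inner y y" using tp pos unfolding t_def by (simp add: field_simps)
    have "- \<bar>C\<bar> \<le> C" by simp
    hence a2: "t^2 * (- \<bar>C\<bar>) \<le> t^2 * C" by (rule mult_left_mono) simp
    have a3: "t * (t * \<bar>C\<bar>) \<le> t * inner y y" using a1 tp by (simp add: mult_left_mono)
    have "2 * t * inner y y - t * inner y y \<le> 0" using a0 a2 a3 by (simp add: power2_eq_square algebra_simps)
    hence "t * inner y y \<le> 0" by simp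
    moreover have "t * inner y y > 0" using tp pos by simp
    ultimately show False by simp
  qed
  hence "y = 0" by simp
  hence "A *v u = l *\<^sub>R u" by (simp add: y_def)
  moreover have "u \<noteq> 0" using un by auto
  ultimately show ?thesis using uU by blast
qed

lemma span_eig:
  fixes A :: "real^'n^'n"
  assumes sym: "transpose A = A"
  shows "span {w. \<exists>\<mu>. A *v w = \<mu> *\<^sub>R w} = UNIV"
proof (rule ccontr)
  define E where "E = {w. \<exists>\<mu>. A *v w = \<mu> *\<^sub>R w}"
  have symI: "inner x (A *v y) = inner y (A *v x)" for x y
  proof -
    have "inner x (A *v y) = inner (x v* A) y" by (simp add: dot_lmul_matrix)
    also have "x v* A = A *v x" using vector_transpose_matrix[of x A] sym by simp
    finally show ?thesis by (simp add: inner_commute)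
  qed
  assume "span {w. \<exists>\<mu>. A *v w = \<mu> *\<^sub>R w} \<noteq> UNIV"
  hence "span E \<subset> span UNIV" unfolding E_def by auto
  then obtain x where x: "x \<noteq> 0" "\<And>y. y \<in> span E \<Longrightarrow> orthogonal x y"
    using orthogonal_to_subspace_exists_gen by blast
  define U where "U = {x. \<forall>w\<in>E. inner x w = 0}"
  have sub: "subspace U" unfolding U_def subspace_def
    by (simp add: inner_add_left)
  have xU: "x \<in> U" unfolding U_def using x(2) by (simp add: orthogonal_def span_base)
  have inv: "A *v z \<in> U" if "z \<in> U" for z
  proof -
    { fix w assume "w \<in> E"
      then obtain \<mu> where "A *v w = \<mu> *\<^sub>R w" unfolding E_def by blast
      hence "inner (A *v z) w = \<mu> * inner z w" using symI[of w z] by (simp add: inner_commute)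
      hence "inner (A *v z) w = 0" using that `w \<in> E` unfolding U_def by simp }
    thus ?thesis unfolding U_def by blast
  qed
  obtain u where "u \<in> U" "u \<noteq> 0" "\<exists>\<mu>. A *v u = \<mu> *\<^sub>R u"
    using eig_exists[OF sym sub xU x(1) inv] by blast
  hence "u \<in> E" "inner u u = 0" unfolding U_def E_def by auto
  thus False using `u \<noteq> 0` by simp
qed

lemma spectral_fun:
  fixes M :: "'b::finite \<Rightarrow> 'b \<Rightarrow> real" and v :: "'b \<Rightarrow> real"
  assumes symM: "\<And>x y. M x y = M y x"
  shows "\<exists>S::(real^'b) set. \<exists>f. finite S \<and> (\<forall>w\<in>S. \<exists>\<mu>. \<forall>x. (\<Sum>y\<in>UNIV. M x y * f w y) = \<mu> * f w x)
           \<and> (\<forall>x. v x = (\<Sum>w\<in>S. f w x))"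
proof -
  define A :: "real^'b^'b" where "A = (\<chi> i j. M i j)"
  have sym: "transpose A = A" unfolding A_def transpose_def by (simp add: vec_eq_iff symM)
  define vv :: "real^'b" where "vv = (\<chi> i. v i)"
  have "vv \<in> span {w. \<exists>\<mu>. A *v w = \<mu> *\<^sub>R w}" using span_eig[OF sym] by simp
  then obtain t r where t: "finite t" "t \<subseteq> {w. \<exists>\<mu>. A *v w = \<mu> *\<^sub>R w}" "(\<Sum>a\<in>t. r a *\<^sub>R a) = vv"
    unfolding span_explicit by blast
  define f where "f w = (\<lambda>i. r w * w $ i)" for w :: "real^'b"
  have "\<forall>w\<in>t. \<exists>\<mu>. \<forall>x. (\<Sum>y\<in>UNIV. M x y * f w y) = \<mu> * f w x"
  proof
    fix w assume "w \<in> t"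
    then obtain \<mu> where "A *v w = \<mu> *\<^sub>R w" using t(2) by blast
    hence "(A *v w) $ x = \<mu> * w $ x" for x by simp
    hence "(\<Sum>y\<in>UNIV. M x y * w $ y) = \<mu> * w $ x" for x
      unfolding A_def matrix_vector_mult_def by simp
    moreover have "(\<Sum>y\<in>UNIV. M x y * f w y) = r w * (\<Sum>y\<in>UNIV. M x y * w $ y)" for x
      unfolding f_def by (simp add: sum_distrib_left algebra_simps)
    ultimately have "(\<Sum>y\<in>UNIV. M x y * f w y) = \<mu> * f w x" for x
      unfolding f_def by simp
    thus "\<exists>\<mu>. \<forall>x. (\<Sum>y\<in>UNIV. M x y * f w y) = \<mu> * f w x" by blast
  qed
  moreover have "v x = (\<Sum>w\<in>t. f w x)" for x
  proof -
    have "v x = vv $ x" by (simp add: vv_def)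
    also have "\<dots> = (\<Sum>a\<in>t. r a *\<^sub>R a) $ x" using t(3) by simp
    also have "\<dots> = (\<Sum>w\<in>t. f w x)" by (simp add: f_def sum_component)
    finally show ?thesis .
  qed
  ultimately show ?thesis using t(1) by blast
qed

lemma mpow_spec:
  fixes M :: "'b::finite \<Rightarrow> 'b \<Rightarrow> real" and S :: "'i set"
  assumes fin: "finite S"
    and eig: "\<And>w x. w \<in> S \<Longrightarrow> (\<Sum>y\<in>UNIV. M x y * f w y) = mu w * f w x"
    and dec: "\<And>x. (if x = a then 1 else 0) = (\<Sum>w\<in>S. f w x)"
  shows "mpow (\<lambda>x y. z * of_real (M x y)) n c a = (\<Sum>w\<in>S. (z * of_real (mu w))^n * of_real (f w c))"
proof (induction n arbitrary: c)
  case 0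
  have "(if c = a then 1 else 0 :: complex) = of_real (if c = a then 1 else 0)" by simp
  also have "\<dots> = (\<Sum>w\<in>S. of_real (f w c))" using dec[of c] by simp
  finally show ?case by simp
next
  case (Suc n)
  have "mpow (\<lambda>x y. z * of_real (M x y)) (Suc n) c a
      = (\<Sum>y\<in>UNIV. z * of_real (M c y) * (\<Sum>w\<in>S. (z * of_real (mu w))^n * of_real (f w y)))"
    by (simp add: mmult_def Suc.IH)
  also have "\<dots> = (\<Sum>w\<in>S. (z * of_real (mu w))^n * z * of_real (\<Sum>y\<in>UNIV. M c y * f w y))"
    by (simp add: sum_distrib_left sum_distrib_right sum.swap[of _ UNIV S] algebra_simps)
  also have "\<dots> = (\<Sum>w\<in>S. (z * of_real (mu w))^Suc n * of_real (f w c))"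
    by (intro sum.cong refl) (simp add: eig algebra_simps)
  finally show ?case .
qed

lemma mexp_spec:
  fixes M :: "'b::finite \<Rightarrow> 'b \<Rightarrow> real" and S :: "'i set"
  assumes fin: "finite S"
    and eig: "\<And>w x. w \<in> S \<Longrightarrow> (\<Sum>y\<in>UNIV. M x y * f w y) = mu w * f w x"
    and dec: "\<And>x. (if x = a then 1 else 0) = (\<Sum>w\<in>S. f w x)"
  shows "mexp (\<lambda>x y. z * of_real (M x y)) c a = (\<Sum>w\<in>S. exp (z * of_real (mu w)) * of_real (f w c))"
proof -
  have "(\<lambda>n. \<Sum>w\<in>S. (z * of_real (mu w))^n /\<^sub>R fact n * of_real (f w c))
        sums (\<Sum>w\<in>S. exp (z * of_real (mu w)) * of_real (f w c))"
    by (intro sums_sum sums_mult2 exp_converges)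
  moreover have "(\<lambda>n. \<Sum>w\<in>S. (z * of_real (mu w))^n /\<^sub>R fact n * of_real (f w c))
      = (\<lambda>n. mpow (\<lambda>x y. z * of_real (M x y)) n c a / of_nat (fact n))"
    by (simp add: mpow_spec[OF fin eig dec] sum_divide_distrib scaleR_conv_of_real divide_inverse sum_distrib_left algebra_simps)
  ultimately show ?thesis unfolding mexp_def by (simp add: sums_iff)
qed

lemma odd_exp: "odd (q::int) \<Longrightarrow> exp (\<i> * of_real (pi * of_int q)) = -1"
  by (metis Ints_of_int cos_eq_minus1 cos_npi_int exp_integer_2pi_plus1 mult.commute)

lemma sumV:
  fixes F :: "bool \<times> (bool \<times> 'a::finite) \<Rightarrow> real"
  shows "(\<Sum>y\<in>UNIV. F y) = (\<Sum>a'\<in>UNIV. F (False,(False,a')) + F (False,(True,a')) + F (True,(False,a')) + F (True,(True,a')))"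
proof -
  have "(\<Sum>y\<in>UNIV. F y) = (\<Sum>l\<in>UNIV. \<Sum>p\<in>UNIV. F (l,p))"
    by (simp add: sum.cartesian_product UNIV_Times_UNIV[symmetric] del: UNIV_Times_UNIV)
  also have "\<dots> = (\<Sum>l\<in>UNIV. \<Sum>x\<in>UNIV. \<Sum>a'\<in>UNIV. F (l,(x,a')))"
    by (simp add: sum.cartesian_product UNIV_Times_UNIV[symmetric] del: UNIV_Times_UNIV)
  also have "\<dots> = (\<Sum>a'\<in>UNIV. F (False,(False,a')) + F (False,(True,a')) + F (True,(False,a')) + F (True,(True,a')))"
    by (simp add: UNIV_bool sum.distrib add.assoc)
  finally show ?thesis .
qed

lemma adjGb_sum:
  fixes H :: "'a::finite \<Rightarrow> 'a \<Rightarrow> bool" and v :: "bool \<times> (bool \<times> 'a) \<Rightarrow> real"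
  shows "(\<Sum>y\<in>UNIV. adj (blowup2 (dprod K2 H)) (l,(x,a)) y * v y)
       = (\<Sum>a'\<in>UNIV. adj H a a' * (v (False,(\<not>x,a')) + v (True,(\<not>x,a'))))"
  by (cases x) (simp_all add: sumV adj_def blowup2_def dprod_def K2_def algebra_simps)

lemma eig_analysis:
  fixes H :: "'a::finite \<Rightarrow> 'a \<Rightarrow> bool" and v :: "bool \<times> (bool \<times> 'a) \<Rightarrow> real"
  assumes key: "\<And>lam. adj_eigenvalue H lam \<Longrightarrow> exp (\<i> * of_real (2 * \<tau> * lam)) = -1"
    and eig: "\<And>x. (\<Sum>y\<in>UNIV. ((if x = y then real (2*k) else 0) - adj (blowup2 (dprod K2 H)) x y) * v y) = \<mu> * v x"
  shows "exp (\<i> * of_real (\<tau> * \<mu>)) * of_real (v c)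
         = - exp (\<i> * of_real (\<tau> * real (2*k))) * of_real (v (\<not> fst c, snd c))"
proof -
  define s where "s x a = v (False,(x,a)) + v (True,(x,a))" for x a
  define g where "g x a = (\<Sum>a'\<in>UNIV. adj H a a' * s (\<not>x) a')" for x a
  have eq: "real (2*k) * v (l,(x,a)) - g x a = \<mu> * v (l,(x,a))" for l x a
  proof -
    have "(\<Sum>y\<in>UNIV. ((if (l,(x,a)) = y then real (2*k) else 0) - adj (blowup2 (dprod K2 H)) (l,(x,a)) y) * v y)
        = real (2*k) * v (l,(x,a)) - (\<Sum>y\<in>UNIV. adj (blowup2 (dprod K2 H)) (l,(x,a)) y * v y)"
    proof -
      have "(\<Sum>y\<in>UNIV. ((if (l,(x,a)) = y then real (2*k) else 0) - adj (blowup2 (dprod K2 H)) (l,(x,a)) y) * v y)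
        = (\<Sum>y\<in>UNIV. (if (l,(x,a)) = y then real (2*k) * v y else 0)) - (\<Sum>y\<in>UNIV. adj (blowup2 (dprod K2 H)) (l,(x,a)) y * v y)"
        by (subst sum_subtractf[symmetric]) (rule sum.cong, auto simp: algebra_simps)
      thus ?thesis by simp
    qed
    also have "(\<Sum>y\<in>UNIV. adj (blowup2 (dprod K2 H)) (l,(x,a)) y * v y) = g x a"
      unfolding g_def s_def by (rule adjGb_sum)
    finally show ?thesis using eig[of "(l,(x,a))"] by simp
  qed
  define lam where "lam = (real (2*k) - \<mu>) / 2"
  have gs: "g x a = lam * s x a" for x a
    using eq[of False x a] eq[of True x a] unfolding lam_def s_def by (simp add: algebra_simps)
  obtain l x a where c: "c = (l,(x,a))" by (metis prod.exhaust)
  show ?thesis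
  proof (cases "\<forall>x a. s x a = 0")
    case True
    hence g0: "g x a = 0" using gs by simp
    have sw: "v (\<not>l,(x,a)) = - v (l,(x,a))" using True[rule_format, of x a] unfolding s_def
      by (cases l) auto
    have "(real (2*k) - \<mu>) * v (l,(x,a)) = 0" using eq[of l x a] g0 by (simp add: algebra_simps)
    hence "v (l,(x,a)) = 0 \<or> \<mu> = real (2*k)" by auto
    thus ?thesis using sw c by auto
  next
    case False
    then obtain x0 a0 where sx: "s x0 a0 \<noteq> 0" by blast
    define t where "t a = s False a + s True a" for a
    define r where "r a = s False a - s True a" for a
    have ht: "(\<Sum>a'\<in>UNIV. adj H a a' * t a') = lam * t a" for a
    proof -
      have "(\<Sum>a'\<in>UNIV. adj H a a' * t a') = g True a + g False a"
        unfolding t_def g_def by (simp add: sum.distrib algebra_simps)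
      thus ?thesis using gs unfolding t_def by (simp add: algebra_simps)
    qed
    have hr: "(\<Sum>a'\<in>UNIV. adj H a a' * r a') = (- lam) * r a" for a
    proof -
      have "(\<Sum>a'\<in>UNIV. adj H a a' * r a') = g True a - g False a"
        unfolding r_def g_def by (simp add: sum_subtractf algebra_simps)
      thus ?thesis using gs unfolding r_def by (simp add: algebra_simps)
    qed
    have E: "exp (\<i> * of_real (2 * \<tau> * lam)) = -1"
    proof (cases "t a0 = 0")
      case False
      hence "adj_eigenvalue H lam" unfolding adj_eigenvalue_def using ht by (metis)
      thus ?thesis by (rule key)
    next
      case True
      hence "r a0 \<noteq> 0" using sx unfolding t_def r_def by (cases x0) auto
      hence "adj_eigenvalue H (- lam)" unfolding adj_eigenvalue_def using hr by (metis)
      hence "exp (\<i> * of_real (2 * \<tau> * (- lam))) = -1" by (rule key)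
      hence "exp (- (\<i> * of_real (2 * \<tau> * lam))) = -1" by simp
      thus ?thesis by (simp add: exp_minus) (metis inverse_minus_eq inverse_1 inverse_inverse_eq)
    qed
    have lam0: "lam \<noteq> 0" using E by auto
    have vl: "v (l',(x',a')) = g x' a' / (2 * lam)" for l' x' a'
      using eq[of l' x' a'] lam0 unfolding lam_def by (simp add: field_simps)
    have tm: "\<tau> * \<mu> = \<tau> * real (2*k) - 2 * \<tau> * lam" unfolding lam_def by (simp add: field_simps)
    have "exp (\<i> * of_real (\<tau> * \<mu>)) = exp (\<i> * of_real (\<tau> * real (2*k)) - \<i> * of_real (2 * \<tau> * lam))"
      unfolding tm of_real_diff right_diff_distrib ..
    also have "\<dots> = - exp (\<i> * of_real (\<tau> * real (2*k)))" using E by (simp add: exp_diff)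
    finally show ?thesis using c vl by simp
  qed
qed



theorem corollary8:
  fixes H :: "'a::finite \<Rightarrow> 'a \<Rightarrow> bool"
  assumes "simple_graph H"
    and "regular H"
    and "\<not> bipartite H"
    and "\<exists>k::enat. \<forall>lam. adj_eigenvalue H lam \<longrightarrow> (\<exists>m::int. lam = of_int m \<and> nu2 m = k)"
  shows "\<forall>u :: bool \<times> 'a. laplacian_pst (blowup2 (dprod K2 H)) (False, u) (True, u)"
proof
  fix u :: "bool \<times> 'a"
  from assms(1) have symH: "\<And>x y. H x y \<Longrightarrow> H y x" by (simp add: simple_graph_def)
  obtain k where deg: "\<And>x. Defs.degree H x = k" using assms(2) regular_def by blast
  have k0: "k \<noteq> 0"
  proof
    assume "k = 0"
    hence "\<And>x y. \<not> H x y" using deg unfolding Defs.degree_def by (metis card_0_eq empty_Collect_eq finite)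
    thus False using assms(3) unfolding bipartite_def by auto
  qed
  obtain K where hK: "\<And>lam. adj_eigenvalue H lam \<Longrightarrow> (\<exists>m::int. lam = of_int m \<and> nu2 m = K)"
    using assms(4) by blast
  have sumdeg: "(\<Sum>y\<in>UNIV. adj H x y * 1) = 1 * real k" for x
  proof -
    have "(\<Sum>y\<in>UNIV. adj H x y * 1) = real (card {y. H x y})"
      by (simp add: adj_def sum.If_cases)
    thus ?thesis using deg[of x] unfolding Defs.degree_def by simp
  qed
  have "adj_eigenvalue H (real k)" unfolding adj_eigenvalue_def
    by (rule exI[of _ "\<lambda>_. 1"]) (use sumdeg in \<open>auto simp: fun_eq_iff\<close>)
  then obtain m0 where m0: "real k = of_int m0" "nu2 m0 = K" using hK by blast
  have "m0 = int k" using m0(1) by linarith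
  define \<nu> where "\<nu> = multiplicity 2 (int k)"
  have Kv: "K = enat \<nu>" using m0 `m0 = int k` k0 unfolding nu2_def \<nu>_def by simp
  define \<tau> where "\<tau> = pi / 2^(\<nu>+1)"
  have tpos: "\<tau> > 0" unfolding \<tau>_def by simp
  have key: "exp (\<i> * of_real (2 * \<tau> * lam)) = -1" if lamH: "adj_eigenvalue H lam" for lam
  proof -
    obtain m where m: "lam = of_int m" "nu2 m = enat \<nu>" using hK[OF lamH] Kv by blast
    have "m \<noteq> 0" using m(2) unfolding nu2_def by auto
    hence mm: "multiplicity 2 m = \<nu>" using m(2) unfolding nu2_def by simp
    obtain q where q: "m = 2 ^ multiplicity 2 m * q" "\<not> 2 dvd q" by (rule multiplicity_decompose') (use `m \<noteq> 0` in auto)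
    have "2 * \<tau> * lam = pi * of_int q"
      unfolding \<tau>_def m(1) using q(1) mm by (simp add: field_simps)
    thus ?thesis using odd_exp q(2) by simp
  qed
  define Gb where "Gb = blowup2 (dprod K2 H)"
  have degGb: "Defs.degree Gb p = 2 * k" for p
  proof -
    obtain l x a where p: "p = (l,(x,a))" by (metis prod.exhaust)
    have "{q. Gb p q} = UNIV \<times> ({\<not>x} \<times> {a'. H a a'})"
      unfolding p Gb_def blowup2_def dprod_def K2_def by auto
    hence "card {q. Gb p q} = 2 * card {a'. H a a'}" by (simp add: card_cartesian_product)
    thus ?thesis using deg[of a] unfolding Defs.degree_def by simp
  qed
  define Lr where "Lr p q = (if p = q then real (2*k) else 0) - adj Gb p q" for p q
  have symLr: "Lr p q = Lr q p" for p q
    unfolding Lr_def Gb_def adj_def blowup2_def dprod_def K2_def using symH by auto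
  have lapl: "(\<lambda>x y. \<i> * of_real \<tau> * laplacian Gb x y) = (\<lambda>x y. (\<i> * of_real \<tau>) * of_real (Lr x y))"
    by (simp add: laplacian_def Lr_def degGb fun_eq_iff)
  obtain S :: "(real^(bool \<times> bool \<times> 'a)) set" and f where
    S: "finite S" "\<forall>w\<in>S. \<exists>\<mu>. \<forall>x. (\<Sum>y\<in>UNIV. Lr x y * f w y) = \<mu> * f w x"
       "\<forall>x. (if x = (False,u) then 1 else 0) = (\<Sum>w\<in>S. f w x)"
    using spectral_fun[of Lr "\<lambda>x. if x = (False,u) then 1 else 0", OF symLr] by blast
  define mu where "mu w = (SOME \<mu>. \<forall>x. (\<Sum>y\<in>UNIV. Lr x y * f w y) = \<mu> * f w x)" for w
  have eigS: "(\<Sum>y\<in>UNIV. Lr x y * f w y) = mu w * f w x" if "w \<in> S" for w x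
    using someI_ex[OF S(2)[rule_format, OF that]] unfolding mu_def by blast
  define C where "C = exp (\<i> * of_real (\<tau> * real (2*k)))"
  have "mexp (\<lambda>x y. \<i> * of_real \<tau> * laplacian Gb x y) c (False,u) = (if c = (True,u) then - C else 0)" for c
  proof -
    have "mexp (\<lambda>x y. \<i> * of_real \<tau> * laplacian Gb x y) c (False,u)
        = (\<Sum>w\<in>S. exp ((\<i> * of_real \<tau>) * of_real (mu w)) * of_real (f w c))"
      unfolding lapl by (rule mexp_spec[OF S(1) eigS]) (assumption, rule S(3)[rule_format])
    also have "\<dots> = (\<Sum>w\<in>S. - C * of_real (f w (\<not> fst c, snd c)))"
    proof (rule sum.cong[OF refl])
      fix w assume w: "w \<in> S"
      have "exp (\<i> * of_real (\<tau> * mu w)) * of_real (f w c) = - C * of_real (f w (\<not> fst c, snd c))"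
        unfolding C_def
        by (rule eig_analysis[of H \<tau> k "f w" "mu w" c, OF key]) (use eigS[OF w] in \<open>simp_all add: Lr_def Gb_def\<close>)
      thus "exp ((\<i> * of_real \<tau>) * of_real (mu w)) * of_real (f w c) = - C * of_real (f w (\<not> fst c, snd c))"
        by (simp add: mult.assoc)
    qed
    also have "\<dots> = - C * of_real (\<Sum>w\<in>S. f w (\<not> fst c, snd c))"
      by (simp add: sum_distrib_left)
    also have "\<dots> = (if c = (True,u) then - C else 0)"
    proof -
      have r: "(\<Sum>w\<in>S. f w (\<not> fst c, snd c)) = (if c = (True,u) then 1 else 0)"
        using S(3)[rule_format, of "(\<not> fst c, snd c)"] by (cases c) auto
      show ?thesis unfolding r by simp
    qed
    finally show ?thesis .
  qed
  thus "laplacian_pst (blowup2 (dprod K2 H)) (False, u) (True, u)"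
    unfolding laplacian_pst_def Gb_def[symmetric] using tpos by blast
qed

end
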